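(* Let $R\in\mathbb{R}^{m\times N}$, $\lambda\ge 0$, and let $\sigma_1$ be the largest singular value of $R$, with corresponding left singular vector $u^1\in\mathbb{R}^m$ and right singular vector $v_1\in\mathbb{R}^{N}$ (unit vectors with $R v_1=\sigma_1 u^1$). Consider the problem $$\min_{d\in\mathbb{R}^m,\ \|d\|_2=1,\ x\in\mathbb{R}^{1\times N}}\ \frac12\|d\,x-R\|_F^2+\lambda\,\big\|\,\|x\|_2\,\big\|_0 ,$$ where $\|\,\|x\|_2\|_0$ equals $1$ if $x\neq 0$ and $0$ if $x=0$. If $\frac12\|\sigma_1 u^1 v_1^T-R\|_F^2\le\frac12\|R\|_F^2-\lambda$, then $(d,x)=(u^1,\sigma_1 v_1^T)$ is a minimizer. Otherwise, for any $d_0\in\mathbb{R}^m$ with $\|d_0\|_2=1$, the pair $(d_0,0)$ is a minimizer.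
   Context: This is the per-atom update of a K-SVD-type dictionary learning scheme with the row-sparsity ($\ell_{2,0}$) penalty counting nonzero rows of the representation matrix, where $R$ is the residual after removing the contribution of the current atom; in the paper $d_0$ is the current (previous) atom. *)

theory Defs
  imports "HOL-Analysis.Analysis"
begin

text \<open>Matrices in R^(m x N) are rendered as real^'N^'m (rows indexed by 'm).
  A row vector x in R^(1 x N) is rendered as real^'N.\<close>

definition frobenius_norm :: "real^'n^'m \<Rightarrow> real" where
  "frobenius_norm A = sqrt (\<Sum>i\<in>UNIV. \<Sum>j\<in>UNIV. (A $ i $ j)^2)"

definition outer_prod :: "real^'m \<Rightarrow> real^'n \<Rightarrow> real^'n^'m" where
  "outer_prod d x = (\<chi> i j. d $ i * x $ j)"

definition singular_triple :: "real^'n^'m \<Rightarrow> real \<Rightarrow> real^'m \<Rightarrow> real^'n \<Rightarrow> bool" where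
  "singular_triple R \<sigma> u v \<longleftrightarrow> \<sigma> \<ge> 0 \<and> norm u = 1 \<and> norm v = 1 \<and>
     R *v v = \<sigma> *\<^sub>R u \<and> transpose R *v u = \<sigma> *\<^sub>R v"

definition singular_value :: "real^'n^'m \<Rightarrow> real \<Rightarrow> bool" where
  "singular_value R \<sigma> \<longleftrightarrow> (\<exists>u v. singular_triple R \<sigma> u v)"

definition row_l0 :: "real^'n \<Rightarrow> real" where
  "row_l0 x = (if x = 0 then 0 else 1)"

definition atom_objective :: "real^'n^'m \<Rightarrow> real \<Rightarrow> real^'m \<Rightarrow> real^'n \<Rightarrow> real" where
  "atom_objective R lam d x = (1/2) * (frobenius_norm (outer_prod d x - R))^2 + lam * row_l0 x"

definition is_atom_minimizer :: "real^'n^'m \<Rightarrow> real \<Rightarrow> real^'m \<Rightarrow> real^'n \<Rightarrow> bool" where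
  "is_atom_minimizer R lam d x \<longleftrightarrow> norm d = 1 \<and>
     (\<forall>d' x'. norm d' = 1 \<longrightarrow> atom_objective R lam d x \<le> atom_objective R lam d' x')"

end

theory Submission
  imports Defs
begin

lemma adj: fixes M :: "real^'n^'m"
  shows "(M *v x) \<bullet> y = x \<bullet> (transpose M *v y)"
  unfolding inner_vec_def matrix_vector_mult_def transpose_def
  apply (simp only: vec_lambda_beta inner_real_def sum_distrib_left sum_distrib_right)
  apply (subst sum.swap)
  apply (simp add: mult_ac)
  done

lemma normsq: fixes x :: "real^'n" shows "(norm x)^2 = (\<Sum>i\<in>UNIV. (x$i)^2)"
  unfolding power2_norm_eq_inner inner_vec_def inner_real_def by (simp add: power2_eq_square)

lemma frob_expand:
  fixes R :: "real^'n^'m"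
  shows "(frobenius_norm (outer_prod d x - R))^2
     = (norm d)^2 * (norm x)^2 - 2 * ((transpose R *v d) \<bullet> x) + (frobenius_norm R)^2"
proof -
  have nn: "\<And>A::real^'n^'m. 0 \<le> (\<Sum>i\<in>UNIV. \<Sum>j\<in>UNIV. (A $ i $ j)^2)"
    by (intro sum_nonneg) auto
  have "(frobenius_norm (outer_prod d x - R))^2 = (\<Sum>i\<in>UNIV. \<Sum>j\<in>UNIV. (d$i * x$j - R$i$j)^2)"
    unfolding frobenius_norm_def using nn[of "outer_prod d x - R"] by (simp add: outer_prod_def)
  also have "\<dots> = (\<Sum>i\<in>UNIV. \<Sum>j\<in>UNIV. (d$i)^2 * (x$j)^2 - 2 * (d$i * R$i$j * x$j) + (R$i$j)^2)"
    by (intro sum.cong refl) (simp add: power2_eq_square algebra_simps)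
  also have "\<dots> = (\<Sum>i\<in>UNIV. (d$i)^2) * (\<Sum>j\<in>UNIV. (x$j)^2)
      - 2 * (\<Sum>i\<in>UNIV. \<Sum>j\<in>UNIV. d$i * R$i$j * x$j) + (\<Sum>i\<in>UNIV. \<Sum>j\<in>UNIV. (R$i$j)^2)"
    by (simp add: sum.distrib sum_subtractf sum_product sum_distrib_left[where r=2])
  also have "(\<Sum>i\<in>UNIV. \<Sum>j\<in>UNIV. d$i * R$i$j * x$j) = (transpose R *v d) \<bullet> x"
    unfolding inner_vec_def matrix_vector_mult_def transpose_def
    apply (simp only: vec_lambda_beta inner_real_def sum_distrib_left sum_distrib_right)
    apply (subst sum.swap)
    apply (simp add: mult_ac)
    done
  finally show ?thesis unfolding frobenius_norm_def using nn[of R] by (simp add: normsq)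
qed


lemma top_sv: fixes R :: "real^'n^'m"
  shows "\<exists>\<sigma>. singular_value R \<sigma> \<and> (\<forall>d. norm d = 1 \<longrightarrow> norm (transpose R *v d) \<le> \<sigma>)"
proof -
  define A where "A = transpose R"
  define f where "f = (\<lambda>d::real^'m. (norm (A *v d))^2)"
  have cont: "continuous_on (sphere 0 1) f" unfolding f_def
    by (intro continuous_on_power continuous_on_norm linear_continuous_on matrix_vector_mul_bounded_linear)
  have ne: "sphere (0::real^'m) 1 \<noteq> {}"
    using norm_axis_1[of undefined] by (metis empty_iff mem_sphere_0)
  obtain d where d: "d \<in> sphere 0 1" "\<forall>y\<in>sphere 0 1. f y \<le> f d"
    using continuous_attains_sup[OF compact_sphere ne cont] by blast
  define \<mu> where "\<mu> = f d"
  have nd: "norm d = 1" using d by simp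
  have dd: "d \<bullet> d = 1" using nd by (simp add: power2_norm_eq_inner[symmetric])
  have mu: "\<mu> = (norm (A *v d))^2" unfolding \<mu>_def f_def ..
  have mu0: "\<mu> \<ge> 0" unfolding mu by simp
  have bound: "(norm (A *v w))^2 \<le> \<mu> * (norm w)^2" for w
  proof (cases "w = 0")
    case True then show ?thesis by simp
  next
    case False
    define c where "c = norm w"
    have c0: "c > 0" using False c_def by simp
    have "(1/c) *\<^sub>R w \<in> sphere 0 1" using c0 by (simp add: c_def)
    then have "f ((1/c) *\<^sub>R w) \<le> \<mu>" using d \<mu>_def by blast
    then have "(1/c)^2 * (norm (A *v w))^2 \<le> \<mu>"
      unfolding f_def using c0 by (simp add: matrix_vector_mult_scaleR power_divide)
    then have "(norm (A *v w))^2 \<le> \<mu> * c^2" using c0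
      by (simp add: field_simps power2_eq_square)
    then show ?thesis by (simp add: c_def)
  qed
  have key: "(A *v d) \<bullet> (A *v w) = \<mu> * (d \<bullet> w)" for w
  proof -
    define a where "a = \<mu> * (d \<bullet> w) - (A *v d) \<bullet> (A *v w)"
    define b where "b = \<mu> * (norm w)^2 - (norm (A *v w))^2"
    have b0: "b \<ge> 0" using bound[of w] by (simp add: b_def)
    have q: "0 \<le> 2*t*a + t^2*b" for t
    proof -
      have "0 \<le> \<mu> * (norm (d + t *\<^sub>R w))^2 - (norm (A *v (d + t *\<^sub>R w)))^2"
        using bound[of "d + t *\<^sub>R w"] by simp
      also have "(norm (d + t *\<^sub>R w))^2 = 1 + 2*t*(d \<bullet> w) + t^2 * (norm w)^2"
        unfolding power2_norm_eq_inner using dd by (simp add: inner_add_left inner_add_right inner_commute power2_eq_square algebra_simps)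
      also have "(norm (A *v (d + t *\<^sub>R w)))^2 = \<mu> + 2*t*((A *v d) \<bullet> (A *v w)) + t^2 * (norm (A *v w))^2"
        unfolding mu power2_norm_eq_inner by (simp add: matrix_vector_right_distrib matrix_vector_mult_scaleR inner_add_left inner_add_right inner_commute power2_eq_square algebra_simps)
      finally show ?thesis by (simp add: a_def b_def algebra_simps power2_eq_square)
    qed
    define x where "x = a/(b+1)"
    have ax: "a = x*(b+1)" using b0 by (simp add: x_def)
    have "0 \<le> 2*(-x)*a + (-x)^2*b" by (rule q)
    also have "\<dots> = -(x^2) * (b+2)" unfolding ax by (simp add: algebra_simps power2_eq_square)
    finally have "x^2 * (b+2) \<le> 0" by simp
    then have "x^2 \<le> 0" using b0 by (smt (verit) mult_pos_pos zero_le_power2 zero_less_power2)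
    then have "x = 0" by simp
    then have "a^2 \<le> 0" using ax by simp
    then have "a = 0" by simp
    then show ?thesis by (simp add: a_def)
  qed
  have eig: "R *v (A *v d) = \<mu> *\<^sub>R d"
  proof -
    define z where "z = R *v (A *v d) - \<mu> *\<^sub>R d"
    have "(A *v z) \<bullet> (A *v d) = z \<bullet> (R *v (A *v d))"
      using adj[of A z "A *v d"] by (simp add: A_def transpose_transpose)
    then have "z \<bullet> (R *v (A *v d)) = \<mu> * (d \<bullet> z)" using key[of z] by (simp add: inner_commute)
    moreover have "z \<bullet> z = z \<bullet> (R *v (A *v d) - \<mu> *\<^sub>R d)" by (simp add: z_def)
    moreover have "z \<bullet> (R *v (A *v d) - \<mu> *\<^sub>R d) = z \<bullet> (R *v (A *v d)) - \<mu> * (d \<bullet> z)"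
      by (simp add: inner_diff_right inner_commute)
    ultimately have "z \<bullet> z = 0" by simp
    then show ?thesis by (simp add: z_def)
  qed
  have bnd: "\<forall>d'. norm d' = 1 \<longrightarrow> norm (transpose R *v d') \<le> sqrt \<mu>"
  proof (intro allI impI)
    fix d' :: "real^'m" assume "norm d' = 1"
    then have "(norm (A *v d'))^2 \<le> \<mu>" using bound[of d'] by simp
    then show "norm (transpose R *v d') \<le> sqrt \<mu>" unfolding A_def by (simp add: real_le_rsqrt)
  qed
  have sv: "singular_value R (sqrt \<mu>)"
  proof (cases "\<mu> = 0")
    case True
    have Az: "A *v w = 0" for w using bound[of w] True by simp
    define v :: "real^'n" where "v = axis undefined 1"
    have "(R *v v) \<bullet> (R *v v) = v \<bullet> (A *v (R *v v))" using adj[of R v] by (simp add: A_def)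
    then have Rv: "R *v v = 0" using Az by simp
    have "singular_triple R 0 d v" unfolding singular_triple_def
      using nd Rv Az[of d] by (simp add: v_def A_def[symmetric])
    then show ?thesis using True by (auto simp: singular_value_def)
  next
    case False
    then have mp: "\<mu> > 0" using mu0 by simp
    define s where "s = sqrt \<mu>"
    have s0: "s > 0" using mp s_def by simp
    have ss: "s * s = \<mu>" using mu0 s_def by simp
    define v where "v = (1/s) *\<^sub>R (A *v d)"
    have nA: "norm (A *v d) = s" using mu s_def by simp
    have "singular_triple R s d v" unfolding singular_triple_def
    proof (intro conjI)
      show "norm v = 1" using nA s0 by (simp add: v_def)
      show "R *v v = s *\<^sub>R d" using eig s0 ss
        by (simp add: v_def matrix_vector_mult_scaleR field_simps)
      show "transpose R *v d = s *\<^sub>R v" using s0 by (simp add: v_def A_def)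
    qed (use nd s0 in auto)
    then show ?thesis by (auto simp: singular_value_def s_def)
  qed
  show ?thesis using sv bnd by blast
qed


theorem proposition3:
  fixes R :: "real^'N^'m" and lam \<sigma>\<^sub>1 :: real and u1 :: "real^'m" and v1 :: "real^'N"
  assumes "lam \<ge> 0"
    and "singular_triple R \<sigma>\<^sub>1 u1 v1"
    and "\<forall>\<sigma>. singular_value R \<sigma> \<longrightarrow> \<sigma> \<le> \<sigma>\<^sub>1"
  shows "((1/2) * (frobenius_norm (\<sigma>\<^sub>1 *\<^sub>R outer_prod u1 v1 - R))^2
            \<le> (1/2) * (frobenius_norm R)^2 - lam
          \<longrightarrow> is_atom_minimizer R lam u1 (\<sigma>\<^sub>1 *\<^sub>R v1))
       \<and> (\<not> ((1/2) * (frobenius_norm (\<sigma>\<^sub>1 *\<^sub>R outer_prod u1 v1 - R))^2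
            \<le> (1/2) * (frobenius_norm R)^2 - lam)
          \<longrightarrow> (\<forall>d0 :: real^'m. norm d0 = 1 \<longrightarrow> is_atom_minimizer R lam d0 0))"
proof -
  define F where "F = frobenius_norm R"
  obtain s0 where s0: "singular_value R s0" "\<forall>d. norm d = 1 \<longrightarrow> norm (transpose R *v d) \<le> s0"
    using top_sv[of R] by blast
  have s1: "s0 \<le> \<sigma>\<^sub>1" using assms(3) s0(1) by blast
  have tr: "\<sigma>\<^sub>1 \<ge> 0" "norm u1 = 1" "norm v1 = 1" "R *v v1 = \<sigma>\<^sub>1 *\<^sub>R u1"
     "transpose R *v u1 = \<sigma>\<^sub>1 *\<^sub>R v1"
    using assms(2) unfolding singular_triple_def by auto
  have lower: "atom_objective R lam d x \<ge> (if x = 0 then F^2/2 else (F^2 - (\<sigma>\<^sub>1)^2)/2 + lam)"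
    if nd: "norm d = 1" for d :: "real^'m" and x :: "real^'N"
  proof (cases "x = 0")
    case True
    then show ?thesis unfolding atom_objective_def using frob_expand[of d x R] nd
      by (simp add: row_l0_def F_def)
  next
    case False
    define a where "a = transpose R *v d"
    have na: "norm a \<le> \<sigma>\<^sub>1" using s0(2) nd s1 a_def by force
    have na2: "(norm a)^2 \<le> (\<sigma>\<^sub>1)^2" using na by (simp add: power_mono)
    have "0 \<le> (norm (x - a))^2" by simp
    also have "(norm (x - a))^2 = (norm x)^2 - 2 * (a \<bullet> x) + (norm a)^2"
      unfolding power2_norm_eq_inner by (simp add: inner_diff_left inner_diff_right inner_commute)
    finally have "(norm x)^2 - 2 * (a \<bullet> x) + (\<sigma>\<^sub>1)^2 \<ge> 0" using na2 by linarith
    then show ?thesis unfolding atom_objective_def using frob_expand[of d x R] nd False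
      by (simp add: row_l0_def F_def a_def)
  qed
  have op: "\<sigma>\<^sub>1 *\<^sub>R outer_prod u1 v1 = outer_prod u1 (\<sigma>\<^sub>1 *\<^sub>R v1)"
    by (simp add: outer_prod_def vec_eq_iff)
  have vv: "v1 \<bullet> v1 = 1" using tr(3) by (simp add: power2_norm_eq_inner[symmetric])
  have valF: "(frobenius_norm (\<sigma>\<^sub>1 *\<^sub>R outer_prod u1 v1 - R))^2 = F^2 - (\<sigma>\<^sub>1)^2"
    unfolding op frob_expand F_def using tr vv by (simp add: power2_eq_square)
  have valU: "atom_objective R lam u1 (\<sigma>\<^sub>1 *\<^sub>R v1) = (F^2 - (\<sigma>\<^sub>1)^2)/2 + lam * row_l0 (\<sigma>\<^sub>1 *\<^sub>R v1)"
    unfolding atom_objective_def using valF op by simp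
  have val0: "atom_objective R lam d0 0 = F^2/2" if "norm d0 = 1" for d0 :: "real^'m"
    unfolding atom_objective_def using frob_expand[of d0 0 R] by (simp add: row_l0_def F_def)
  show ?thesis
  proof (intro conjI impI allI)
    assume c: "(1/2) * (frobenius_norm (\<sigma>\<^sub>1 *\<^sub>R outer_prod u1 v1 - R))^2
            \<le> (1/2) * (frobenius_norm R)^2 - lam"
    then have lamb: "lam \<le> (\<sigma>\<^sub>1)^2/2" using valF F_def by simp
    have uv: "atom_objective R lam u1 (\<sigma>\<^sub>1 *\<^sub>R v1) \<le> (F^2 - (\<sigma>\<^sub>1)^2)/2 + lam"
    proof (cases "\<sigma>\<^sub>1 = 0")
      case True then show ?thesis using valU lamb assms(1) by (simp add: row_l0_def)
    next
      case False
      then have "\<sigma>\<^sub>1 *\<^sub>R v1 \<noteq> 0" using tr(3) by auto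
      then show ?thesis using valU by (simp add: row_l0_def)
    qed
    show "is_atom_minimizer R lam u1 (\<sigma>\<^sub>1 *\<^sub>R v1)"
      unfolding is_atom_minimizer_def
    proof (intro conjI allI impI)
      show "norm u1 = 1" by (rule tr(2))
      fix d' x' assume nd': "norm (d'::real^'m) = 1"
      have L: "(if x' = 0 then F^2/2 else (F^2 - (\<sigma>\<^sub>1)^2)/2 + lam) \<le> atom_objective R lam d' x'"
        using lower[OF nd', of x'] .
      show "atom_objective R lam u1 (\<sigma>\<^sub>1 *\<^sub>R v1) \<le> atom_objective R lam d' x'"
      proof (cases "x' = 0")
        case True
        then have "F^2/2 \<le> atom_objective R lam d' x'" using L by simp
        moreover have "(F^2 - (\<sigma>\<^sub>1)^2)/2 + lam \<le> F^2/2" using lamb by (simp add: field_simps)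
        ultimately show ?thesis using uv by linarith
      next
        case False
        then have "(F^2 - (\<sigma>\<^sub>1)^2)/2 + lam \<le> atom_objective R lam d' x'" using L by simp
        then show ?thesis using uv lamb by linarith
      qed
    qed
  next
    fix d0 :: "real^'m"
    assume c: "\<not> ((1/2) * (frobenius_norm (\<sigma>\<^sub>1 *\<^sub>R outer_prod u1 v1 - R))^2
            \<le> (1/2) * (frobenius_norm R)^2 - lam)" and n0: "norm d0 = 1"
    then have lamb: "lam > (\<sigma>\<^sub>1)^2/2" using valF F_def by simp
    show "is_atom_minimizer R lam d0 0"
      unfolding is_atom_minimizer_def
    proof (intro conjI allI impI)
      show "norm d0 = 1" by (rule n0)
      fix d' x' assume nd': "norm (d'::real^'m) = 1"
      have L: "(if x' = 0 then F^2/2 else (F^2 - (\<sigma>\<^sub>1)^2)/2 + lam) \<le> atom_objective R lam d' x'"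
        using lower[OF nd', of x'] .
      show "atom_objective R lam d0 0 \<le> atom_objective R lam d' x'"
      proof (cases "x' = 0")
        case True
        then have "F^2/2 \<le> atom_objective R lam d' x'" using L by simp
        then show ?thesis using val0[OF n0] lamb by linarith
      next
        case False
        then have "(F^2 - (\<sigma>\<^sub>1)^2)/2 + lam \<le> atom_objective R lam d' x'" using L by simp
        moreover have "F^2/2 < (F^2 - (\<sigma>\<^sub>1)^2)/2 + lam" using lamb by (simp add: field_simps)
        ultimately show ?thesis using val0[OF n0] by linarith
      qed
    qed
  qed
qed

end
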